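(* Let $n\ge 6$ and let $K$ be a $2$-dimensional shifted simplicial complex on vertex set $[n]$ with $K\subseteq \Delta(5,n)$. Then $f_2(K)\le 4f_1(K)-8<4f_1(K)$.
   Context: A simplicial complex on vertex set $[n]=\{1,\dots,n\}$ is a nonempty family of subsets of $[n]$ closed under taking subsets; $f_i(K)$ is the number of its members of cardinality $i+1$. $K$ is shifted if for every $F\in K$, every $i\in F$ and every $j<i$ with $j\notin F$, also $(F\setminus\{i\})\cup\{j\}\in K$. For $m\le n$, $\Delta(m,n)$ denotes the pure $(m-1)$-dimensional simplicial complex on $[n]$ whose maximal simplices are exactly the sets $S\subseteq[n]$ with $|S|=m$ such that for every $k\in[n]$: if $k\notin S$ then $\{k+1,k+2,\dots,m-k+2\}\subseteq S$ (the interval being empty when $k+1>m-k+2$). So $\Delta(5,n)$ has maximal simplices the $5$-sets $S$ with ($1\notin S\Rightarrow\{2,\dots,6\}\subseteq S$), ($2\notin S\Rightarrow \{3,4,5\}\subseteq S$), ($3\notin S\Rightarrow 4\in S$). *)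

theory Defs
  imports Main
begin

definition simplicial_complex :: "nat \<Rightarrow> nat set set \<Rightarrow> bool" where
  "simplicial_complex n K \<longleftrightarrow> K \<noteq> {} \<and> (\<forall>F\<in>K. F \<subseteq> {1..n}) \<and> (\<forall>F\<in>K. \<forall>G. G \<subseteq> F \<longrightarrow> G \<in> K)"

definition fnum :: "nat \<Rightarrow> nat set set \<Rightarrow> nat" where
  "fnum i K = card {F\<in>K. card F = i + 1}"

definition has_dim :: "nat \<Rightarrow> nat set set \<Rightarrow> bool" where
  "has_dim d K \<longleftrightarrow> (\<exists>F\<in>K. card F = d + 1) \<and> (\<forall>F\<in>K. finite F \<and> card F \<le> d + 1)"

definition shifted :: "nat \<Rightarrow> nat set set \<Rightarrow> bool" where
  "shifted n K \<longleftrightarrow> (\<forall>F\<in>K. \<forall>i\<in>F. \<forall>j. 1 \<le> j \<and> j < i \<and> j \<notin> F \<longrightarrow> (F - {i}) \<union> {j} \<in> K)"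

definition Delta_facets :: "nat \<Rightarrow> nat \<Rightarrow> nat set set" where
  "Delta_facets m n = {S. S \<subseteq> {1..n} \<and> card S = m \<and>
     (\<forall>k\<in>{1..n}. k \<notin> S \<longrightarrow> {k+1..(m+2)-k} \<subseteq> S)}"

definition Delta :: "nat \<Rightarrow> nat \<Rightarrow> nat set set" where
  "Delta m n = {G. \<exists>S\<in>Delta_facets m n. G \<subseteq> S}"

end

theory Submission
  imports Defs
begin

lemma card_le2: assumes "A \<subseteq> S" "card A = 3" "card S = 5" "T \<subseteq> S - A" "finite S"
  shows "card T \<le> 2"
proof -
  have "card (S - A) = 2" using assms by (simp add: card_Diff_subset finite_subset)
  then show ?thesis using assms(4) by (metis card_mono finite_Diff assms(5))
qed

lemma tri_min:
  assumes "T \<in> Delta 5 n" "card T = 3" "n \<ge> 6"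
  shows "\<exists>x\<in>T. x \<le> 4"
proof (rule ccontr)
  assume H: "\<not> (\<exists>x\<in>T. x \<le> 4)"
  obtain S where S: "S \<in> Delta_facets 5 n" "T \<subseteq> S" using assms(1) unfolding Delta_def by blast
  have Sn: "S \<subseteq> {1..n}" and c5: "card S = 5"
    and cond: "\<forall>k\<in>{1..n}. k \<notin> S \<longrightarrow> {k+1..(5+2)-k} \<subseteq> S"
    using S(1) unfolding Delta_facets_def by auto
  have fS: "finite S" using Sn finite_subset by blast
  show False
  proof (cases "1 \<in> S")
    case False
    then have "{2..6} \<subseteq> S" using cond assms(3) by force
    moreover have "card {2..6::nat} = 5" by simp
    ultimately have eq: "S = {2..6}" using c5 fS by (metis card_subset_eq)
    have "T \<subseteq> S - {2,3,4}" using S(2) H by auto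
    then have "card T \<le> 2" using card_le2[of "{2,3,4}" S T] eq c5 fS by auto
    then show False using assms(2) by simp
  next
    case s1: True
    show False
    proof (cases "2 \<in> S")
      case False
      then have "{3..5} \<subseteq> S" using cond assms(3) by force
      then have "{1,3,4} \<subseteq> S" using s1 by auto
      moreover have "T \<subseteq> S - {1,3,4}" using S(2) H by auto
      ultimately have "card T \<le> 2" using card_le2[of "{1,3,4}" S T] c5 fS by auto
      then show False using assms(2) by simp
    next
      case s2: True
      show False
      proof (cases "3 \<in> S")
        case False
        then have "{4..4} \<subseteq> S" using cond assms(3) by force
        then have "{1,2,4} \<subseteq> S" using s1 s2 by auto
        moreover have "T \<subseteq> S - {1,2,4}" using S(2) H by auto
        ultimately have "card T \<le> 2" using card_le2[of "{1,2,4}" S T] c5 fS by auto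
        then show False using assms(2) by simp
      next
        case True
        then have "{1,2,3} \<subseteq> S" using s1 s2 by auto
        moreover have "T \<subseteq> S - {1,2,3}" using S(2) H by auto
        ultimately have "card T \<le> 2" using card_le2[of "{1,2,3}" S T] c5 fS by auto
        then show False using assms(2) by simp
      qed
    qed
  qed
qed

theorem lemma1p14:
  fixes n :: nat and K :: "nat set set"
  assumes "n \<ge> 6"
    and "simplicial_complex n K"
    and "has_dim 2 K"
    and "shifted n K"
    and "K \<subseteq> Delta 5 n"
  shows "int (fnum 2 K) \<le> 4 * int (fnum 1 K) - 8 \<and> 4 * int (fnum 1 K) - 8 < 4 * int (fnum 1 K)"
proof -
  have sub: "\<And>F. F \<in> K \<Longrightarrow> F \<subseteq> {1..n}" and down: "\<And>F G. F \<in> K \<Longrightarrow> G \<subseteq> F \<Longrightarrow> G \<in> K"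
    using assms(2) unfolding simplicial_complex_def by auto
  have finF: "\<And>F. F \<in> K \<Longrightarrow> finite F" using sub finite_subset by blast
  have finK: "finite K" using sub by (meson Pow_iff finite_Pow_iff finite_atLeastAtMost finite_subset subsetI)
  have sh: "\<And>F i j. F \<in> K \<Longrightarrow> i \<in> F \<Longrightarrow> 1 \<le> j \<Longrightarrow> j < i \<Longrightarrow> j \<notin> F \<Longrightarrow> (F - {i}) \<union> {j} \<in> K"
    using assms(4) unfolding shifted_def by blast
  define T where "T = {F\<in>K. card F = 3}"
  define E where "E = {F\<in>K. card F = 2}"
  define E' where "E' = {e\<in>E. 1 \<notin> e}"
  have f2: "fnum 2 K = card T" unfolding fnum_def T_def by simp
  have f1: "fnum 1 K = card E" unfolding fnum_def E_def by (simp add: numeral_2_eq_2)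
  have finE: "finite E" using finK unfolding E_def by simp
  have triF: "\<And>F. F \<in> T \<Longrightarrow> Min F \<in> F \<and> 1 \<le> Min F \<and> Min F \<le> 4 \<and> F - {Min F} \<in> E'
      \<and> (\<forall>x\<in>F - {Min F}. Min F < x)"
  proof -
    fix F assume FT: "F \<in> T"
    then have FK: "F \<in> K" and c3: "card F = 3" unfolding T_def by auto
    have fin: "finite F" using finF FK by blast
    have ne: "F \<noteq> {}" using c3 by auto
    have mF: "Min F \<in> F" using fin ne by simp
    have m1: "1 \<le> Min F" using mF sub[OF FK] by auto
    obtain x where "x \<in> F" "x \<le> 4" using tri_min[of F n] FK assms(5,1) c3 by auto
    then have m4: "Min F \<le> 4" using fin by (meson Min_le order_trans)
    have gt: "\<forall>x\<in>F - {Min F}. Min F < x" using fin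
      by (metis DiffE Min_le insertI1 le_neq_implies_less)
    have "F - {Min F} \<in> K" using down FK by blast
    moreover have "card (F - {Min F}) = 2" using c3 mF fin by simp
    moreover have "1 \<notin> F - {Min F}" using gt m1 by fastforce
    ultimately have "F - {Min F} \<in> E'" unfolding E'_def E_def by simp
    then show "?thesis F" using mF m1 m4 gt by blast
  qed
  obtain F0 where F0: "F0 \<in> K" "card F0 = 3" using assms(3) unfolding has_dim_def by auto
  have F0T: "F0 \<in> T" using F0 unfolding T_def by simp
  define a where "a = Min F0"
  obtain b c where bc: "F0 - {a} = {b,c}" "b \<noteq> c"
  proof -
    have "card (F0 - {a}) = 2" using triF[OF F0T] F0 finF unfolding a_def by simp
    then show ?thesis using that by (meson card_2_iff)
  qed
  have ab: "a < b" "a < c" using triF[OF F0T] bc unfolding a_def by auto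
  have a1: "1 \<le> a" "a \<in> F0" using triF[OF F0T] unfolding a_def by auto
  have edge: "\<And>y. y \<in> F0 - {a} \<Longrightarrow> {1,y} \<in> K"
  proof -
    fix y assume y: "y \<in> F0 - {a}"
    have ay: "a < y" using triF[OF F0T] y unfolding a_def by auto
    have e: "{a,y} \<in> K" using down[OF F0(1)] y a1 by auto
    show "{1,y} \<in> K"
    proof (cases "a = 1")
      case True then show ?thesis using e by simp
    next
      case False
      then have "({a,y} - {a}) \<union> {1} \<in> K" using sh[OF e, of a 1] a1 ay by auto
      moreover have "({a,y} - {a}) \<union> {1} = {1,y}" using ay by auto
      ultimately show ?thesis by simp
    qed
  qed
  have eb: "{1,b} \<in> E - E'" using edge[of b] bc ab a1 unfolding E_def E'_def by auto
  have ec: "{1,c} \<in> E - E'" using edge[of c] bc ab a1 unfolding E_def E'_def by auto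
  have "{1,b} \<noteq> {1,c}" using bc ab a1 by (auto simp: doubleton_eq_iff)
  then have "card {{1,b},{1,c}} = 2" by simp
  moreover have "{{1,b},{1,c}} \<subseteq> E - E'" using eb ec by simp
  ultimately have "2 \<le> card (E - E')" using card_mono[OF finite_Diff[OF finE]] by metis
  moreover have "card E = card E' + card (E - E')"
  proof -
    have ss: "E' \<subseteq> E" unfolding E'_def by auto
    have fE': "finite E'" using finE ss finite_subset by blast
    show ?thesis using card_Diff_subset[OF fE' ss] card_mono[OF finE ss] by simp
  qed
  ultimately have cE: "card E' + 2 \<le> card E" by simp
  have inj: "inj_on (\<lambda>F. (F - {Min F}, Min F)) T"
  proof (rule inj_onI)
    fix F G assume F: "F \<in> T" and G: "G \<in> T" and eq: "(F - {Min F}, Min F) = (G - {Min G}, Min G)"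
    have "F = insert (Min F) (F - {Min F})" using triF[OF F] by blast
    also have "\<dots> = insert (Min G) (G - {Min G})" using eq by (metis prod.inject)
    also have "\<dots> = G" using triF[OF G] by blast
    finally show "F = G" .
  qed
  have img: "(\<lambda>F. (F - {Min F}, Min F)) ` T \<subseteq> E' \<times> {1..4}" using triF by auto
  have finE': "finite E'" using finE unfolding E'_def by simp
  have "card T \<le> card (E' \<times> {1..(4::nat)})"
    using card_inj_on_le[OF inj img] finE' by simp
  then have "card T \<le> card E' * 4" by (simp add: card_cartesian_product)
  then have "card T + 8 \<le> 4 * card E" using cE by linarith
  then show ?thesis unfolding f1 f2 by linarith
qed

end
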